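(* Let $C\ge 8$ and let $p=p(n)$ satisfy $0<p\le 2/n$ and $n^2p=\omega(1)$. Let $H$ be an $n$-vertex connected graph with maximum degree $\Delta\le n^2p/(4800C)$. Let $G=G(n,p)$ on $V(H)$ and $R=H\cup G$. Then whp $R$ contains vertex-disjoint connected subgraphs $R_1,\dots,R_m$ such that (1) $96C\Delta(np)^{-1}\le |V(R_i)|\le 192C\Delta(np)^{-1}$ for each $i\in[m]$, and (2) $m\ge n^2p/(9600C\Delta)$.
   Context: $G(n,p)$ is the binomial random graph on $n$ vertices (each pair independently an edge with probability $p$). Asymptotics are as $n\to\infty$; whp means with probability $1-o(1)$. *)

theory Defs
  imports "HOL-Probability.Probability"
begin

definition pairs_on :: "nat set \<Rightarrow> nat set set" where
  "pairs_on V = {e. \<exists>i j. i \<in> V \<and> j \<in> V \<and> i \<noteq> j \<and> e = {i, j}}"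

definition graph_on :: "nat set \<Rightarrow> nat set set \<Rightarrow> bool" where
  "graph_on V E \<longleftrightarrow> E \<subseteq> pairs_on V"

definition connected_graph :: "nat set \<Rightarrow> nat set set \<Rightarrow> bool" where
  "connected_graph V E \<longleftrightarrow> V \<noteq> {} \<and>
     (\<forall>u\<in>V. \<forall>v\<in>V. (\<lambda>x y. {x, y} \<in> E)\<^sup>*\<^sup>* u v)"

definition degree :: "nat set set \<Rightarrow> nat \<Rightarrow> nat" where
  "degree E v = card {u. {u, v} \<in> E}"

definition max_degree :: "nat \<Rightarrow> nat set set \<Rightarrow> nat" where
  "max_degree n E = Max ((\<lambda>v. degree E v) ` {..<n})"

definition Gnp :: "nat \<Rightarrow> real \<Rightarrow> (nat set \<Rightarrow> bool) pmf" where
  "Gnp n p = Pi_pmf (pairs_on {..<n}) False (\<lambda>_. bernoulli_pmf p)"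

definition edges_of :: "nat \<Rightarrow> (nat set \<Rightarrow> bool) \<Rightarrow> nat set set" where
  "edges_of n f = {e \<in> pairs_on {..<n}. f e}"

definition good_family :: "nat \<Rightarrow> real \<Rightarrow> real \<Rightarrow> real \<Rightarrow> nat set set \<Rightarrow> bool" where
  "good_family n C p \<Delta> R \<longleftrightarrow>
     (\<exists>Rs :: (nat set \<times> nat set set) list.
        (\<forall>i < length Rs.
           fst (Rs ! i) \<subseteq> {..<n} \<and> graph_on (fst (Rs ! i)) (snd (Rs ! i)) \<and>
           snd (Rs ! i) \<subseteq> R \<and> connected_graph (fst (Rs ! i)) (snd (Rs ! i)) \<and>
           96 * C * \<Delta> / (real n * p) \<le> real (card (fst (Rs ! i))) \<and>
           real (card (fst (Rs ! i))) \<le> 192 * C * \<Delta> / (real n * p)) \<and>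
        (\<forall>i < length Rs. \<forall>j < length Rs. i \<noteq> j \<longrightarrow> fst (Rs ! i) \<inter> fst (Rs ! j) = {}) \<and>
        real (length Rs) \<ge> (real n)^2 * p / (9600 * C * \<Delta>))"

end

theory Submission
  imports Defs
begin


definition rreach :: "('a \<Rightarrow> 'a \<Rightarrow> bool) \<Rightarrow> 'a set \<Rightarrow> 'a \<Rightarrow> 'a \<Rightarrow> bool" where
  "rreach r S = (\<lambda>x y. r x y \<and> x \<in> S \<and> y \<in> S)\<^sup>*\<^sup>*"

definition rconn :: "('a \<Rightarrow> 'a \<Rightarrow> bool) \<Rightarrow> 'a set \<Rightarrow> bool" where
  "rconn r S \<longleftrightarrow> (\<forall>u\<in>S. \<forall>v\<in>S. rreach r S u v)"

lemma rreach_refl[simp]: "rreach r S u u"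
  by (simp add: rreach_def)

lemma rreach_step: "rreach r S u v \<Longrightarrow> r v w \<Longrightarrow> v \<in> S \<Longrightarrow> w \<in> S \<Longrightarrow> rreach r S u w"
  unfolding rreach_def by (simp add: rtranclp.rtrancl_into_rtrancl)

lemma rreach_edge: "r u v \<Longrightarrow> u \<in> S \<Longrightarrow> v \<in> S \<Longrightarrow> rreach r S u v"
  unfolding rreach_def by auto

lemma rreach_trans: "rreach r S u v \<Longrightarrow> rreach r S v w \<Longrightarrow> rreach r S u w"
  unfolding rreach_def by simp

lemma rreach_mono: "rreach r S u v \<Longrightarrow> S \<subseteq> T \<Longrightarrow> rreach r T u v"
  unfolding rreach_def by (erule rtranclp_mono[THEN predicate2D, rotated]) auto

lemma rreach_mono_r: "rreach r S u v \<Longrightarrow> (\<And>x y. r x y \<Longrightarrow> r' x y) \<Longrightarrow> rreach r' S u v"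
  unfolding rreach_def by (erule rtranclp_mono[THEN predicate2D, rotated]) auto

lemma rreach_sym: assumes "\<And>x y. r x y \<Longrightarrow> r y x" "rreach r S u v" shows "rreach r S v u"
  using assms(2) unfolding rreach_def
proof (induction rule: rtranclp_induct)
  case base then show ?case by simp
next
  case (step y z)
  have "(\<lambda>x y. r x y \<and> x \<in> S \<and> y \<in> S) z y" using step assms(1) by auto
  then show ?case using step(3) by (rule converse_rtranclp_into_rtranclp)
qed

lemma rreach_in: "rreach r S u v \<Longrightarrow> u \<in> S \<Longrightarrow> v \<in> S"
  unfolding rreach_def by (induction rule: rtranclp_induct) auto

lemma rreach_in2: "rreach r S u v \<Longrightarrow> u \<noteq> v \<Longrightarrow> u \<in> S \<and> v \<in> S"
  unfolding rreach_def by (induction rule: rtranclp_induct) auto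

lemma rreach_cross:
  assumes "rreach r V a b" "a \<in> S" "b \<notin> S"
  shows "\<exists>x z. x \<in> S \<and> z \<notin> S \<and> x \<in> V \<and> z \<in> V \<and> r x z"
  using assms unfolding rreach_def
  by (induction rule: rtranclp_induct) auto

lemma rreach_within_comp:
  assumes "rreach r T u v" "rreach r T y u"
  shows "rreach r {w. rreach r T y w} u v"
  using assms(1)
proof (induction rule: rtranclp_induct[OF assms(1)[unfolded rreach_def]])
  case 1 then show ?case by simp
next
  case (2 b c)
  have "rreach r T u b" using 2(1) by (simp add: rreach_def)
  then have yb: "rreach r T y b" using assms(2) rreach_trans by metis
  then have yc: "rreach r T y c" using 2(2) rreach_step by metis
  have "rreach r {w. rreach r T y w} u b" using 2 by (simp add: rreach_def)
  then show ?case using rreach_step[of r _ u b c] yb yc 2(2) by auto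
qed

lemma rreach_outside_comp:
  assumes "rreach r T a b" "b \<notin> {w. rreach r T y w}"
  shows "rreach r (T - {w. rreach r T y w}) a b"
  using assms
proof (induction rule: rtranclp_induct[OF assms(1)[unfolded rreach_def]])
  case 1 then show ?case by simp
next
  case (2 b' c)
  have b': "b' \<notin> {w. rreach r T y w}"
  proof
    assume "b' \<in> {w. rreach r T y w}"
    then have "rreach r T y c" using 2(2) rreach_step by fastforce
    then show False using 2(5) by simp
  qed
  have "rreach r (T - {w. rreach r T y w}) a b'" using 2(3)[OF _ b'] 2(1) by (simp add: rreach_def)
  then show ?case using rreach_step[of r _ a b' c] b' 2 by auto
qed


abbreviation eadj :: "'a set set \<Rightarrow> 'a \<Rightarrow> 'a \<Rightarrow> bool" where
  "eadj E \<equiv> (\<lambda>x y. {x, y} \<in> E)"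

lemma eadj_sym: "eadj E x y \<Longrightarrow> eadj E y x"
  by (simp add: insert_commute)

lemma rconn_empty[simp]: "rconn r {}"
  by (simp add: rconn_def)

lemma rconn_from_root:
  assumes "\<And>x y. r x y \<Longrightarrow> r y x" "\<forall>w\<in>S. rreach r S x w"
  shows "rconn r S"
  unfolding rconn_def
proof (intro ballI)
  fix u v assume "u \<in> S" "v \<in> S"
  then have "rreach r S u x" "rreach r S x v" using assms rreach_sym[of r] by auto
  then show "rreach r S u v" by (rule rreach_trans)
qed

lemma piece_exists:
  fixes E :: "'a set set"
  assumes fin: "finite V" and cV: "rconn (eadj E) V" and k1: "1 \<le> k" and kV: "k \<le> card V"
    and deg: "\<And>v. finite {u. {u, v} \<in> E} \<and> card {u. {u, v} \<in> E} \<le> D"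
  shows "\<exists>S\<subseteq>V. rconn (eadj E) S \<and> rconn (eadj E) (V - S) \<and> k \<le> card S \<and> card S \<le> 1 + D * (k - 1)"
proof -
  let ?r = "eadj E"
  define Valid where "Valid S \<longleftrightarrow> S \<subseteq> V \<and> rconn ?r S \<and> rconn ?r (V - S) \<and> k \<le> card S" for S
  have "Valid V" using cV kV by (simp add: Valid_def)
  then obtain S where VS: "Valid S" and minS: "\<And>S'. Valid S' \<Longrightarrow> card S \<le> card S'"
    using ex_has_least_nat[of Valid V card] by blast
  have SV: "S \<subseteq> V" and cS: "rconn ?r S" and cVS: "rconn ?r (V - S)" and kS: "k \<le> card S"
    using VS by (auto simp: Valid_def)
  have finS: "finite S" using SV fin finite_subset by blast
  have "S \<noteq> {}" using kS k1 by auto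
  have "card S \<le> 1 + D * (k - 1)"
  proof (rule ccontr)
    assume big: "\<not> card S \<le> 1 + D * (k - 1)"
    obtain x where xS: "x \<in> S" and xout: "V - S \<noteq> {} \<Longrightarrow> (\<exists>z0\<in>V - S. ?r x z0)"
    proof (cases "V - S = {}")
      case True then show ?thesis using that \<open>S \<noteq> {}\<close> by blast
    next
      case False
      then obtain b where b: "b \<in> V - S" by blast
      obtain a where a: "a \<in> S" using \<open>S \<noteq> {}\<close> by blast
      have "rreach ?r V a b" using cV a b SV unfolding rconn_def by blast
      from rreach_cross[OF this, of S] a b obtain x z where "x \<in> S" "z \<notin> S" "z \<in> V" "?r x z" by blast
      then show ?thesis using that by blast
    qed
    define T where "T = S - {x}"
    define Nb where "Nb = {u. {u, x} \<in> E} \<inter> T"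
    define C where "C y = {w. rreach ?r T y w}" for y
    have finNb: "finite Nb" using deg[of x] by (simp add: Nb_def)
    have cardNb: "card Nb \<le> D" using deg[of x] card_mono[of "{u. {u, x} \<in> E}" Nb] by (auto simp: Nb_def)
    have CT: "C y \<subseteq> T" if "y \<in> T" for y using rreach_in that by (auto simp: C_def)
    have cover0: "w = x \<or> (\<exists>y\<in>Nb. rreach ?r T y w)" if "rreach ?r S x w" for w
      using that[unfolded rreach_def]
    proof (induction rule: rtranclp_induct)
      case base then show ?case by simp
    next
      case (step w' w)
      show ?case
      proof (cases "w = x")
        case True then show ?thesis by simp
      next
        case False
        show ?thesis
        proof (cases "w' = x")
          case True
          then have "w \<in> Nb" using step(2) False by (auto simp: Nb_def T_def insert_commute)
          then show ?thesis by (intro disjI2 bexI[of _ w]) auto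
        next
          case w'x: False
          then obtain y where "y \<in> Nb" "rreach ?r T y w'" using step(3) by blast
          moreover have "w' \<in> T" "w \<in> T" using step(2) w'x False by (auto simp: T_def)
          ultimately show ?thesis using rreach_step[of ?r T y w' w] step(2) by blast
        qed
      qed
    qed
    have cover: "T \<subseteq> (\<Union>y\<in>Nb. C y)"
    proof
      fix w assume "w \<in> T"
      then have "rreach ?r S x w" "w \<noteq> x" using cS xS unfolding rconn_def T_def by auto
      then show "w \<in> (\<Union>y\<in>Nb. C y)" using cover0 by (auto simp: C_def)
    qed
    have finC: "finite (C y)" if "y \<in> Nb" for y
      using CT[of y] that finS finite_subset by (auto simp: Nb_def T_def)
    have "\<exists>y\<in>Nb. k \<le> card (C y)"
    proof (rule ccontr)
      assume "\<not> ?thesis"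
      then have le: "card (C y) \<le> k - 1" if "y \<in> Nb" for y using that by force
      have "card T \<le> card (\<Union>y\<in>Nb. C y)" using cover finNb finC by (intro card_mono) auto
      also have "\<dots> \<le> (\<Sum>y\<in>Nb. card (C y))" using card_UN_le finNb by blast
      also have "\<dots> \<le> (\<Sum>y\<in>Nb. k - 1)" using le by (intro sum_mono) auto
      also have "\<dots> = card Nb * (k - 1)" by simp
      also have "\<dots> \<le> D * (k - 1)" using cardNb by simp
      finally have "card T \<le> D * (k - 1)" .
      moreover have "card T = card S - 1" unfolding T_def using xS by (rule card_Diff_singleton)
      moreover have "card S \<ge> 1" using xS finS card_0_eq[of S] by fastforce
      ultimately show False using big by simp
    qed
    then obtain y where yNb: "y \<in> Nb" and ky: "k \<le> card (C y)" by blast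
    have yT: "y \<in> T" using yNb by (simp add: Nb_def)
    have CyT: "C y \<subseteq> T" using CT yT .
    have xC: "x \<notin> C y" using CyT by (auto simp: T_def)
    have "Valid (C y)"
      unfolding Valid_def
    proof (intro conjI)
      show "C y \<subseteq> V" using CyT SV by (auto simp: T_def)
      show "k \<le> card (C y)" by fact
      show "rconn ?r (C y)"
        unfolding rconn_def
      proof (intro ballI)
        fix u v assume "u \<in> C y" "v \<in> C y"
        then have "rreach ?r T y u" "rreach ?r T y v" by (auto simp: C_def)
        then have "rreach ?r T u y" "rreach ?r T y v" using rreach_sym[of ?r, OF eadj_sym] by auto
        then have "rreach ?r T u v" by (rule rreach_trans)
        then show "rreach ?r (C y) u v" using rreach_within_comp \<open>rreach ?r T y u\<close> by (fastforce simp: C_def)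
      qed
      have xV: "x \<in> V - C y" using xS SV xC by auto
      show "rconn ?r (V - C y)"
      proof (rule rconn_from_root[OF eadj_sym])
        show "\<forall>w\<in>V - C y. rreach ?r (V - C y) x w"
        proof
          fix w assume w: "w \<in> V - C y"
          consider "w = x" | "w \<in> V - S" | "w \<in> T - C y" using w by (auto simp: T_def)
          then show "rreach ?r (V - C y) x w"
          proof cases
            case 1 then show ?thesis by simp
          next
            case 2
            then obtain z0 where z0: "z0 \<in> V - S" "?r x z0" using xout by blast
            have "rreach ?r (V - S) z0 w" using cVS z0 2 by (simp add: rconn_def)
            then have z0w: "rreach ?r (V - C y) z0 w" by (rule rreach_mono) (use CyT in \<open>auto simp: T_def\<close>)
            have z0V: "z0 \<in> V - C y" using z0(1) CyT by (auto simp: T_def)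
            have xz0: "rreach ?r (V - C y) x z0" by (rule rreach_edge[of ?r, OF z0(2) xV z0V])
            show ?thesis by (rule rreach_trans[OF xz0 z0w])
          next
            case 3
            then obtain y' where y': "y' \<in> Nb" "rreach ?r T y' w" using cover by (auto simp: C_def)
            have "rreach ?r (T - C y) y' w" using rreach_outside_comp[OF y'(2), of y] 3 by (simp add: C_def)
            then have r1: "rreach ?r (V - C y) y' w" by (rule rreach_mono) (use SV in \<open>auto simp: T_def\<close>)
            have "y' \<in> T - C y"
              using rreach_in2[OF \<open>rreach ?r (T - C y) y' w\<close>] 3 by (cases "y' = w") auto
            then have "y' \<in> V - C y" using SV by (auto simp: T_def)
            moreover have "?r x y'" using y'(1) by (auto simp: Nb_def insert_commute)
            ultimately have "rreach ?r (V - C y) x y'"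
              using rreach_edge[of ?r x y', OF _ xV] by blast
            then show ?thesis using r1 by (rule rreach_trans)
          qed
        qed
      qed
    qed
    then have "card S \<le> card (C y)" by (rule minS)
    moreover have "card (C y) < card S"
      using CyT xS finS by (intro psubset_card_mono) (auto simp: T_def)
    ultimately show False by simp
  qed
  then show ?thesis using SV cS cVS kS by blast
qed


lemma pieces_exist:
  fixes E :: "'a set set"
  assumes fin: "finite V" and cV: "rconn (eadj E) V" and k1: "1 \<le> k"
    and deg: "\<And>v. finite {u. {u, v} \<in> E} \<and> card {u. {u, v} \<in> E} \<le> D"
  shows "\<exists>P. finite P \<and> (\<forall>X\<in>P. X \<subseteq> V \<and> rconn (eadj E) X \<and> k \<le> card X \<and> card X \<le> 1 + D * (k - 1))
     \<and> (\<forall>X\<in>P. \<forall>Y\<in>P. X \<noteq> Y \<longrightarrow> X \<inter> Y = {}) \<and> card V < card (\<Union>P) + k"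
  using fin cV
proof (induction "card V" arbitrary: V rule: less_induct)
  case less
  show ?case
  proof (cases "card V < k")
    case True
    then show ?thesis by (intro exI[of _ "{}"]) auto
  next
    case False
    then have kV: "k \<le> card V" by simp
    obtain S where S: "S \<subseteq> V" "rconn (eadj E) S" "rconn (eadj E) (V - S)" "k \<le> card S"
      "card S \<le> 1 + D * (k - 1)"
      using piece_exists[OF less(2,3) k1 kV deg] by blast
    have finS: "finite S" using S(1) less(2) finite_subset by blast
    have Sne: "S \<noteq> {}" using S(4) k1 by auto
    have lt: "card (V - S) < card V"
    proof -
      obtain x where "x \<in> S" using Sne by blast
      then have "V - S \<subset> V" using S(1) by blast
      then show ?thesis using less(2) by (rule psubset_card_mono[rotated])
    qed
    have finVS: "finite (V - S)" using less(2) by simp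
    from less(1)[OF lt finVS S(3)] obtain P where Pall: "finite P \<and> (\<forall>X\<in>P. X \<subseteq> V - S \<and> rconn (eadj E) X \<and> k \<le> card X \<and> card X \<le> 1 + D * (k - 1))
      \<and> (\<forall>X\<in>P. \<forall>Y\<in>P. X \<noteq> Y \<longrightarrow> X \<inter> Y = {}) \<and> card (V - S) < card (\<Union>P) + k"
      by (elim exE) (rule that)
    have P: "finite P" "\<forall>X\<in>P. X \<subseteq> V - S \<and> rconn (eadj E) X \<and> k \<le> card X \<and> card X \<le> 1 + D * (k - 1)"
      "\<forall>X\<in>P. \<forall>Y\<in>P. X \<noteq> Y \<longrightarrow> X \<inter> Y = {}" "card (V - S) < card (\<Union>P) + k"
      using Pall by simp_all
    have PV: "\<forall>X\<in>P. X \<subseteq> V - S" using P(2) by blast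
    have disj: "S \<inter> \<Union>P = {}" using PV by blast
    have UPV: "\<Union>P \<subseteq> V" using PV by blast
    have finU: "finite (\<Union>P)" using finite_subset[OF UPV less(2)] .
    have c1: "card (\<Union>(insert S P)) = card S + card (\<Union>P)"
      using card_Un_disjoint[OF finS finU disj] by simp
    have c2: "card (V - S) = card V - card S" using card_Diff_subset[OF finS S(1)] .
    have c3: "card S \<le> card V" using card_mono[OF less(2) S(1)] .
    have main: "card V < card (\<Union>(insert S P)) + k" using P(4) c1 c2 c3 by linarith
    have dis: "\<forall>X\<in>insert S P. \<forall>Y\<in>insert S P. X \<noteq> Y \<longrightarrow> X \<inter> Y = {}"
    proof (intro ballI impI)
      fix X Y assume "X \<in> insert S P" "Y \<in> insert S P" "X \<noteq> Y"
      then show "X \<inter> Y = {}" using P(3) PV by blast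
    qed
    have props: "\<forall>X\<in>insert S P. X \<subseteq> V \<and> rconn (eadj E) X \<and> k \<le> card X \<and> card X \<le> 1 + D * (k - 1)"
      using P(2) S by blast
    have "finite (insert S P)" using P(1) by simp
    with props dis main show ?thesis by blast
  qed
qed



definition padj :: "'a set set \<Rightarrow> 'a set \<Rightarrow> 'a set \<Rightarrow> bool" where
  "padj F X Y \<longleftrightarrow> (\<exists>a\<in>X. \<exists>b\<in>Y. {a, b} \<in> F)"

lemma padj_sym: assumes "padj F X Y" shows "padj F Y X"
proof -
  obtain a b where ab: "a \<in> X" "b \<in> Y" "{a, b} \<in> F" using assms unfolding padj_def by blast
  then have "{b, a} \<in> F" by (simp add: insert_commute)
  then show ?thesis using ab unfolding padj_def by blast
qed

lemma rreach_sym_padj: "rreach (padj F) S u v \<Longrightarrow> rreach (padj F) S v u"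
  by (rule rreach_sym[of "padj F", OF padj_sym])

lemma grow:
  fixes L :: real and K :: "'a set set"
  assumes finK: "finite K" and cK: "rconn (padj F) K" and small: "\<forall>X\<in>K. finite X \<and> card X \<le> L"
    and big: "L \<le> card (\<Union>K)"
  shows "T0 \<subseteq> K \<Longrightarrow> T0 \<noteq> {} \<Longrightarrow> rconn (padj F) T0 \<Longrightarrow> card (\<Union>T0) < L \<Longrightarrow>
    \<exists>T\<subseteq>K. T \<noteq> {} \<and> rconn (padj F) T \<and> L \<le> card (\<Union>T) \<and> card (\<Union>T) \<le> 2 * L"
proof (induction "card (K - T0)" arbitrary: T0 rule: less_induct)
  case less
  have "T0 \<noteq> K" using less(5) big by auto
  then obtain Y0 where Y0: "Y0 \<in> K" "Y0 \<notin> T0" using less(2) by blast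
  obtain X0 where X0: "X0 \<in> T0" using less(3) by blast
  have "rreach (padj F) K X0 Y0" using cK Y0 X0 less(2) unfolding rconn_def by blast
  from rreach_cross[OF this X0 Y0(2)] obtain X1 Y where XY: "X1 \<in> T0" "Y \<notin> T0" "Y \<in> K" "padj F X1 Y"
    by blast
  define T1 where "T1 = insert Y T0"
  have T1K: "T1 \<subseteq> K" using XY less(2) by (auto simp: T1_def)
  have cT1: "rconn (padj F) T1"
  proof (rule rconn_from_root[of "padj F", OF padj_sym])
    show "\<forall>w\<in>T1. rreach (padj F) T1 X0 w"
    proof
      fix w assume "w \<in> T1"
      then consider "w \<in> T0" | "w = Y" by (auto simp: T1_def)
      then show "rreach (padj F) T1 X0 w"
      proof cases
        case 1
        then have "rreach (padj F) T0 X0 w" using less(4) X0 by (simp add: rconn_def)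
        then show ?thesis by (rule rreach_mono) (auto simp: T1_def)
      next
        case 2
        have "rreach (padj F) T0 X0 X1" using less(4) X0 XY by (simp add: rconn_def)
        then have a: "rreach (padj F) T1 X0 X1" by (rule rreach_mono) (auto simp: T1_def)
        have "X1 \<in> T1" "Y \<in> T1" using XY by (auto simp: T1_def)
        then have "rreach (padj F) T1 X1 Y" using rreach_edge[of "padj F", OF XY(4)] by blast
        then show ?thesis using rreach_trans[OF a] 2 by simp
      qed
    qed
  qed
  have finY: "finite Y" using small XY by blast
  have "card (\<Union>T1) \<le> card Y + card (\<Union>T0)" unfolding T1_def by (simp add: card_Un_le)
  moreover have cY: "real (card Y) \<le> L" using small XY(3) by blast
  ultimately have le2: "real (card (\<Union>T1)) < 2 * L" using less(5) by linarith
  have le2': "real (card (\<Union>T1)) \<le> 2 * L" using le2 by simp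
  have T1ne: "T1 \<noteq> {}" by (simp add: T1_def)
  show ?case
  proof (cases "L \<le> card (\<Union>T1)")
    case True
    then show ?thesis using T1K cT1 le2' T1ne by blast
  next
    case False
    then have F: "real (card (\<Union>T1)) < L" by simp
    have "K - T1 \<subset> K - T0" using XY by (auto simp: T1_def)
    then have "card (K - T1) < card (K - T0)"
      using finK by (intro psubset_card_mono) auto
    from less(1)[OF this T1K T1ne cT1 F] show ?thesis .
  qed
qed

definition Prop :: "'a set set \<Rightarrow> 'a set set \<Rightarrow> real \<Rightarrow> bool" where
  "Prop Q F s \<longleftrightarrow> (\<forall>A B. A \<subseteq> Q \<longrightarrow> B \<subseteq> Q \<longrightarrow> A \<inter> B = {} \<longrightarrow> s \<le> card (\<Union>A) \<longrightarrow> s \<le> card (\<Union>B)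
      \<longrightarrow> (\<exists>a\<in>\<Union>A. \<exists>b\<in>\<Union>B. {a, b} \<in> F))"

lemma Prop_mono: assumes "Prop P F s" "Q \<subseteq> P" shows "Prop Q F s"
  unfolding Prop_def
proof (intro allI impI)
  fix A B assume h: "A \<subseteq> Q" "B \<subseteq> Q" "A \<inter> B = {}" "s \<le> card (\<Union>A)" "s \<le> card (\<Union>B)"
  have "A \<subseteq> P" "B \<subseteq> P" using h(1,2) assms(2) by auto
  from assms(1)[unfolded Prop_def, rule_format, OF this h(3,4,5)]
  show "\<exists>a\<in>\<Union>A. \<exists>b\<in>\<Union>B. {a, b} \<in> F" .
qed


lemma cluster_exists:
  fixes L s :: real and Q :: "'a set set"
  assumes finQ: "finite Q" and small: "\<forall>X\<in>Q. finite X \<and> card X \<le> L" and L0: "0 < L"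
    and Ls: "L \<le> s" and PQ: "Prop Q F s" and big: "3 * s \<le> card (\<Union>Q)"
  shows "\<exists>T\<subseteq>Q. T \<noteq> {} \<and> rconn (padj F) T \<and> L \<le> card (\<Union>T) \<and> card (\<Union>T) \<le> 2 * L"
proof -
  let ?r = "padj F"
  define comp where "comp X = {Y. rreach ?r Q X Y}" for X
  have compQ: "comp X \<subseteq> Q" if "X \<in> Q" for X using rreach_in that by (auto simp: comp_def)
  have compX: "X \<in> comp X" for X by (simp add: comp_def)
  have comp_conn: "rconn ?r (comp X)" for X
    unfolding rconn_def
  proof (intro ballI)
    fix u v assume "u \<in> comp X" "v \<in> comp X"
    then have h: "rreach ?r Q X u" "rreach ?r Q X v" by (auto simp: comp_def)
    have "rreach ?r Q u X" using rreach_sym_padj[OF h(1)] .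
    then have "rreach ?r Q u v" using h(2) by (rule rreach_trans)
    from rreach_within_comp[OF this h(1)] show "rreach ?r (comp X) u v" by (simp add: comp_def)
  qed
  have finU: "finite (\<Union>Q)" using finQ small by blast
  show ?thesis
  proof (cases "\<exists>X\<in>Q. L \<le> card (\<Union>(comp X))")
    case True
    then obtain X where X: "X \<in> Q" "L \<le> card (\<Union>(comp X))" by blast
    have KQ: "comp X \<subseteq> Q" using compQ X(1) .
    have finK: "finite (comp X)" using finite_subset[OF KQ finQ] .
    have smallK: "\<forall>Y\<in>comp X. finite Y \<and> card Y \<le> L" using small KQ by blast
    show ?thesis
    proof (cases "L \<le> card X")
      case True
      have "rconn ?r {X}" by (simp add: rconn_def)
      moreover have "real (card (\<Union>{X})) \<le> 2 * L" using small X(1) L0 by force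
      ultimately show ?thesis using X(1) True by (intro exI[of _ "{X}"]) simp
    next
      case False
      then have c: "real (card (\<Union>{X})) < L" by simp
      have "rconn ?r {X}" by (simp add: rconn_def)
      from grow[OF finK comp_conn smallK X(2), of "{X}", OF _ _ this c] compX
      obtain T where "T \<subseteq> comp X" "T \<noteq> {}" "rconn ?r T" "L \<le> card (\<Union>T)" "card (\<Union>T) \<le> 2 * L"
        by blast
      then show ?thesis using KQ by (intro exI[of _ T]) blast
    qed
  next
    case False
    then have compsmall: "real (card (\<Union>(comp X))) < L" if "X \<in> Q" for X using that by force
    define Cl where "Cl A \<longleftrightarrow> A \<subseteq> Q \<and> (\<forall>X\<in>A. comp X \<subseteq> A) \<and> s \<le> card (\<Union>A)" for A
    have "Cl Q" using compQ big Ls L0 by (auto simp: Cl_def)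
    then obtain A where A: "Cl A" and minA: "\<And>A'. Cl A' \<Longrightarrow> card A \<le> card A'"
      using ex_has_least_nat[of Cl Q card] by blast
    have AQ: "A \<subseteq> Q" and Acl: "\<forall>X\<in>A. comp X \<subseteq> A" and sA: "s \<le> card (\<Union>A)" using A by (auto simp: Cl_def)
    have finA: "finite A" using finite_subset[OF AQ finQ] .
    have "A \<noteq> {}" using sA Ls L0 by auto
    then obtain X where XA: "X \<in> A" by blast
    define A' where "A' = A - comp X"
    have A'Q: "A' \<subseteq> Q" using AQ by (auto simp: A'_def)
    have A'cl: "\<forall>Z\<in>A'. comp Z \<subseteq> A'"
    proof (intro ballI subsetI)
      fix Z Y assume Z: "Z \<in> A'" and Y: "Y \<in> comp Z"
      have "Y \<in> A" using Acl Z Y by (auto simp: A'_def)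
      moreover have "Y \<notin> comp X"
      proof
        assume "Y \<in> comp X"
        then have "rreach ?r Q X Y" by (simp add: comp_def)
        moreover have "rreach ?r Q Y Z" using Y rreach_sym_padj by (simp add: comp_def)
        ultimately have "rreach ?r Q X Z" by (rule rreach_trans)
        then show False using Z by (simp add: A'_def comp_def)
      qed
      ultimately show "Y \<in> A'" by (simp add: A'_def)
    qed
    have "card A' < card A" using XA compX finA by (intro psubset_card_mono) (auto simp: A'_def)
    then have "\<not> Cl A'" using minA by (meson not_le)
    then have sA': "real (card (\<Union>A')) < s" using A'Q A'cl by (auto simp: Cl_def)
    have sub1: "\<Union>A \<subseteq> \<Union>A' \<union> \<Union>(comp X)" by (auto simp: A'_def)
    have "\<Union>A' \<subseteq> \<Union>Q" "\<Union>(comp X) \<subseteq> \<Union>Q" using AQ compQ[of X] XA by (auto simp: A'_def)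
    then have fin1: "finite (\<Union>A' \<union> \<Union>(comp X))" using finU by (meson finite_UnI finite_subset)
    have "card (\<Union>A) \<le> card (\<Union>A' \<union> \<Union>(comp X))" using card_mono[OF fin1 sub1] .
    also have "\<dots> \<le> card (\<Union>A') + card (\<Union>(comp X))" by (rule card_Un_le)
    finally have "real (card (\<Union>A)) \<le> real (card (\<Union>A')) + real (card (\<Union>(comp X)))" by linarith
    moreover have "real (card (\<Union>(comp X))) < L" using compsmall XA AQ by blast
    ultimately have A2: "real (card (\<Union>A)) < 2 * s" using sA' Ls by linarith
    define B where "B = Q - A"
    have "\<Union>Q \<subseteq> \<Union>A \<union> \<Union>B" by (auto simp: B_def)
    then have "card (\<Union>Q) \<le> card (\<Union>A \<union> \<Union>B)"
    proof -
      have "\<Union>A \<subseteq> \<Union>Q" "\<Union>B \<subseteq> \<Union>Q" using AQ by (auto simp: B_def)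
      then have "finite (\<Union>A \<union> \<Union>B)" using finU by (meson finite_UnI finite_subset)
      then show ?thesis using card_mono \<open>\<Union>Q \<subseteq> \<Union>A \<union> \<Union>B\<close> by blast
    qed
    also have "\<dots> \<le> card (\<Union>A) + card (\<Union>B)" by (rule card_Un_le)
    finally have "real (card (\<Union>Q)) \<le> real (card (\<Union>A)) + real (card (\<Union>B))" by linarith
    then have sB: "s \<le> card (\<Union>B)" using A2 big by linarith
    have BQ: "B \<subseteq> Q" and AB: "A \<inter> B = {}" by (auto simp: B_def)
    from PQ[unfolded Prop_def, rule_format, OF AQ BQ AB sA sB]
    obtain a b where "a \<in> \<Union>A" "b \<in> \<Union>B" "{a, b} \<in> F" by blast
    then obtain Xa Xb where Xab: "Xa \<in> A" "Xb \<in> B" "a \<in> Xa" "b \<in> Xb" "{a, b} \<in> F" by blast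
    then have "padj F Xa Xb" unfolding padj_def by blast
    moreover have "Xa \<in> Q" "Xb \<in> Q" using Xab AQ BQ by auto
    ultimately have "rreach ?r Q Xa Xb" by (intro rreach_edge)
    then have "Xb \<in> A" using Acl Xab(1) by (auto simp: comp_def)
    then show ?thesis using Xab(2) by (simp add: B_def)
  qed
qed


lemma union_conn:
  assumes pc: "\<forall>X\<in>T. rconn (eadj H) X" and cT: "rconn (padj F) T"
  shows "rconn (eadj (H \<union> F)) (\<Union>T)"
  unfolding rconn_def
proof (intro ballI)
  fix a b assume "a \<in> \<Union>T" "b \<in> \<Union>T"
  then obtain X Y where XY: "X \<in> T" "a \<in> X" "Y \<in> T" "b \<in> Y" by blast
  have lift: "rreach (eadj (H \<union> F)) (\<Union>T) u v" if "Z \<in> T" "u \<in> Z" "v \<in> Z" for Z u v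
  proof -
    have "rreach (eadj H) Z u v" using pc that by (auto simp: rconn_def)
    then have "rreach (eadj (H \<union> F)) Z u v" by (rule rreach_mono_r) auto
    then show ?thesis by (rule rreach_mono) (use that in auto)
  qed
  have "rreach (padj F) T X Y" using cT XY by (auto simp: rconn_def)
  from this[unfolded rreach_def] have "\<forall>b\<in>Y. rreach (eadj (H \<union> F)) (\<Union>T) a b"
  proof (induction rule: rtranclp_induct)
    case base
    then show ?case using lift XY(1,2) by blast
  next
    case (step Y' Y)
    then obtain c d where cd: "c \<in> Y'" "d \<in> Y" "{c, d} \<in> F" unfolding padj_def by blast
    show ?case
    proof
      fix b assume b: "b \<in> Y"
      have ac: "rreach (eadj (H \<union> F)) (\<Union>T) a c" using step.IH cd(1) by blast
      have "c \<in> \<Union>T" "d \<in> \<Union>T" using cd step.hyps(2) by auto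
      then have cd': "rreach (eadj (H \<union> F)) (\<Union>T) c d" using cd(3) by (intro rreach_edge) auto
      have db: "rreach (eadj (H \<union> F)) (\<Union>T) d b" using lift step.hyps(2) cd(2) b by blast
      show "rreach (eadj (H \<union> F)) (\<Union>T) a b" using rreach_trans[OF rreach_trans[OF ac cd'] db] .
    qed
  qed
  then show "rreach (eadj (H \<union> F)) (\<Union>T) a b" using XY by blast
qed

lemma clusters_exist:
  fixes L s :: real and P :: "'a set set"
  assumes finP: "finite P" and small: "\<forall>X\<in>P. finite X \<and> card X \<le> L" and L0: "0 < L"
    and Ls: "L \<le> s" and PP: "Prop P F s"
  shows "Q \<subseteq> P \<Longrightarrow> \<exists>Ts. (\<forall>i<length Ts. Ts!i \<subseteq> Q \<and> Ts!i \<noteq> {} \<and> rconn (padj F) (Ts!i) \<and>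
        L \<le> card (\<Union>(Ts!i)) \<and> card (\<Union>(Ts!i)) \<le> 2 * L) \<and>
      (\<forall>i<length Ts. \<forall>j<length Ts. i \<noteq> j \<longrightarrow> Ts!i \<inter> Ts!j = {}) \<and>
      (card (\<Union>Q) - 3 * s) / (2 * L) \<le> length Ts"
proof (induction "card Q" arbitrary: Q rule: less_induct)
  case less
  have finQ: "finite Q" using finite_subset[OF less(2) finP] .
  show ?case
  proof (cases "3 * s \<le> card (\<Union>Q)")
    case False
    then have "(card (\<Union>Q) - 3 * s) / (2 * L) \<le> 0" using L0 by (simp add: divide_nonpos_pos)
    then show ?thesis by (intro exI[of _ "[]"]) simp
  next
    case True
    have smallQ: "\<forall>X\<in>Q. finite X \<and> card X \<le> L" using small less(2) by blast
    obtain T where T: "T \<subseteq> Q" "T \<noteq> {}" "rconn (padj F) T" "L \<le> card (\<Union>T)" "card (\<Union>T) \<le> 2 * L"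
      using cluster_exists[OF finQ smallQ L0 Ls Prop_mono[OF PP less(2)] True] by blast
    have lt: "card (Q - T) < card Q" using T(1,2) finQ
      by (metis Diff_subset card_Diff_subset card_mono diff_less finite_subset card_gt_0_iff le_neq_implies_less
          card_seteq Diff_eq_empty_iff subset_empty)
    obtain Ts where Ts: "\<forall>i<length Ts. Ts!i \<subseteq> Q - T \<and> Ts!i \<noteq> {} \<and> rconn (padj F) (Ts!i) \<and>
        L \<le> card (\<Union>(Ts!i)) \<and> card (\<Union>(Ts!i)) \<le> 2 * L"
      "\<forall>i<length Ts. \<forall>j<length Ts. i \<noteq> j \<longrightarrow> Ts!i \<inter> Ts!j = {}"
      "(card (\<Union>(Q - T)) - 3 * s) / (2 * L) \<le> length Ts"
      using less(1)[OF lt] less(2) by blast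
    have finU: "finite (\<Union>Q)" using finQ smallQ by blast
    have subQ: "\<Union>Q \<subseteq> \<Union>T \<union> \<Union>(Q - T)" by auto
    have finTT: "finite (\<Union>T \<union> \<Union>(Q - T))"
    proof -
      have "\<Union>T \<subseteq> \<Union>Q" "\<Union>(Q - T) \<subseteq> \<Union>Q" using T(1) by auto
      then show ?thesis using finU by (meson finite_UnI finite_subset)
    qed
    have "card (\<Union>Q) \<le> card (\<Union>T \<union> \<Union>(Q - T))" using card_mono[OF finTT subQ] .
    also have "\<dots> \<le> card (\<Union>T) + card (\<Union>(Q - T))" by (rule card_Un_le)
    finally have "real (card (\<Union>Q)) \<le> real (card (\<Union>T)) + real (card (\<Union>(Q - T)))" by linarith
    then have "real (card (\<Union>Q)) - 3 * s \<le> 2 * L + (real (card (\<Union>(Q - T))) - 3 * s)" using T(5) by linarith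
    then have "(real (card (\<Union>Q)) - 3 * s) / (2 * L) \<le> (2 * L + (real (card (\<Union>(Q - T))) - 3 * s)) / (2 * L)"
      using L0 by (intro divide_right_mono) auto
    also have "\<dots> = 1 + (real (card (\<Union>(Q - T))) - 3 * s) / (2 * L)" using L0 by (simp add: field_simps)
    also have "\<dots> \<le> real (length (T # Ts))" using Ts(3) by simp
    finally have len: "(real (card (\<Union>Q)) - 3 * s) / (2 * L) \<le> real (length (T # Ts))" .
    have p1: "\<forall>i<length (T # Ts). (T # Ts)!i \<subseteq> Q \<and> (T # Ts)!i \<noteq> {} \<and> rconn (padj F) ((T # Ts)!i) \<and>
        L \<le> card (\<Union>((T # Ts)!i)) \<and> card (\<Union>((T # Ts)!i)) \<le> 2 * L"
    proof (intro allI impI)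
      fix i assume "i < length (T # Ts)"
      then show "(T # Ts)!i \<subseteq> Q \<and> (T # Ts)!i \<noteq> {} \<and> rconn (padj F) ((T # Ts)!i) \<and>
        L \<le> card (\<Union>((T # Ts)!i)) \<and> card (\<Union>((T # Ts)!i)) \<le> 2 * L"
        using T Ts(1) by (cases i) auto
    qed
    have p2: "\<forall>i<length (T # Ts). \<forall>j<length (T # Ts). i \<noteq> j \<longrightarrow> (T # Ts)!i \<inter> (T # Ts)!j = {}"
    proof (intro allI impI)
      fix i j assume ij: "i < length (T # Ts)" "j < length (T # Ts)" "i \<noteq> j"
      show "(T # Ts)!i \<inter> (T # Ts)!j = {}"
      proof (cases i)
        case 0
        then obtain j' where "j = Suc j'" "j' < length Ts" using ij by (cases j) auto
        then show ?thesis using 0 Ts(1) by auto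
      next
        case (Suc i')
        show ?thesis
        proof (cases j)
          case 0
          then show ?thesis using Suc Ts(1) ij by auto
        next
          case (Suc j')
          then show ?thesis using \<open>i = Suc i'\<close> Ts(2) ij by auto
        qed
      qed
    qed
    show ?thesis using p1 p2 len by blast
  qed
qed



lemma finite_pairs_on: "finite V \<Longrightarrow> finite (pairs_on V)"
proof -
  assume "finite V"
  moreover have "pairs_on V \<subseteq> Pow V" by (auto simp: pairs_on_def)
  ultimately show ?thesis by (meson finite_Pow_iff finite_subset)
qed

lemma prob_no_edges:
  assumes E: "E \<subseteq> pairs_on {..<n}" and p: "0 \<le> p" "p \<le> 1"
  shows "measure_pmf.prob (Gnp n p) {f. \<forall>e\<in>E. \<not> f e} = (1 - p) ^ card E"
proof -
  define A where "A = pairs_on {..<n}"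
  define B where "B e = (if e \<in> E then {False} else UNIV)" for e :: "nat set"
  have finA: "finite A" unfolding A_def by (rule finite_pairs_on) simp
  have eq: "{f. \<forall>e\<in>E. \<not> f e} = Pi A B" using E by (auto simp: Pi_def B_def A_def)
  have "measure_pmf.prob (Gnp n p) (Pi A B) = (\<Prod>x\<in>A. measure_pmf.prob (bernoulli_pmf p) (B x))"
    unfolding Gnp_def A_def[symmetric] by (rule measure_Pi_pmf_Pi[OF finA])
  also have "\<dots> = (\<Prod>x\<in>A. (if x \<in> E then 1 - p else 1))"
    by (intro prod.cong refl) (auto simp: B_def measure_pmf_single p)
  also have "\<dots> = (1 - p) ^ card (A \<inter> E)"
    using finA by (simp add: prod.If_cases)
  also have "A \<inter> E = E" using E by (auto simp: A_def)
  finally show ?thesis using eq by simp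
qed

lemma one_minus_pow_le_exp:
  fixes p :: real assumes "0 \<le> p" "p \<le> 1"
  shows "(1 - p) ^ m \<le> exp (- p * m)"
proof -
  have "(1 - p) ^ m \<le> exp (- p) ^ m"
    using assms by (intro power_mono) (auto simp: exp_ge_add_one_self[of "-p", simplified])
  also have "\<dots> = exp (- p * m)" by (simp add: exp_of_nat_mult[symmetric] mult.commute)
  finally show ?thesis .
qed

lemma prob_not_Prop:
  fixes P :: "nat set set" and s p :: real
  assumes finP: "finite P" and sub: "\<forall>X\<in>P. X \<subseteq> {..<n}"
    and dis: "\<forall>X\<in>P. \<forall>Y\<in>P. X \<noteq> Y \<longrightarrow> X \<inter> Y = {}"
    and p: "0 \<le> p" "p \<le> 1" and s: "0 \<le> s"
  shows "measure_pmf.prob (Gnp n p) {f. \<not> Prop P (edges_of n f) s} \<le> 4 ^ card P * exp (- p * s\<^sup>2)"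
proof -
  define I where "I = {(A, B). A \<subseteq> P \<and> B \<subseteq> P \<and> A \<inter> B = {} \<and> s \<le> card (\<Union>A) \<and> s \<le> card (\<Union>B)}"
  define Ep where "Ep AB = (\<lambda>(a, b). {a, b}) ` (\<Union>(fst AB) \<times> \<Union>(snd AB))" for AB :: "nat set set \<times> nat set set"
  define Ev where "Ev AB = {f. \<forall>e\<in>Ep AB. \<not> f e}" for AB
  have IP: "I \<subseteq> Pow P \<times> Pow P" by (auto simp: I_def)
  have finI: "finite I" using finite_subset[OF IP] finP by simp
  have cardI: "card I \<le> 4 ^ card P"
  proof -
    have "card I \<le> card (Pow P \<times> Pow P)" using IP finP by (intro card_mono) auto
    also have "\<dots> = 4 ^ card P" using finP by (simp add: card_cartesian_product card_Pow power_mult_distrib[symmetric])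
    finally show ?thesis .
  qed
  have disjU: "\<Union>A \<inter> \<Union>B = {}" if "(A, B) \<in> I" for A B
  proof (rule ccontr)
    assume "\<Union>A \<inter> \<Union>B \<noteq> {}"
    then obtain x X Y where "x \<in> X" "X \<in> A" "x \<in> Y" "Y \<in> B" by blast
    moreover have "A \<subseteq> P" "B \<subseteq> P" "A \<inter> B = {}" using that by (auto simp: I_def)
    ultimately have "X \<in> P" "Y \<in> P" "X \<noteq> Y" "x \<in> X \<inter> Y" by auto
    then show False using dis by blast
  qed
  have Ep_sub: "Ep (A, B) \<subseteq> pairs_on {..<n}" if "(A, B) \<in> I" for A B
  proof
    fix e assume "e \<in> Ep (A, B)"
    then obtain a b where ab: "a \<in> \<Union>A" "b \<in> \<Union>B" "e = {a, b}" by (auto simp: Ep_def)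
    have "a \<noteq> b" using disjU[OF that] ab by blast
    moreover have "a < n" "b < n" using ab that sub by (auto simp: I_def)
    ultimately show "e \<in> pairs_on {..<n}" using ab(3) by (auto simp: pairs_on_def)
  qed
  have cardEp: "card (Ep (A, B)) = card (\<Union>A) * card (\<Union>B)" if "(A, B) \<in> I" for A B
  proof -
    have "inj_on (\<lambda>(a, b). {a, b}) (\<Union>A \<times> \<Union>B)"
    proof (rule inj_onI)
      fix x y assume hx: "x \<in> \<Union>A \<times> \<Union>B" "y \<in> \<Union>A \<times> \<Union>B"
        "(\<lambda>(a, b). {a, b}) x = (\<lambda>(a, b). {a, b}) y"
      obtain a b where x: "x = (a, b)" by (cases x)
      obtain a' b' where y: "y = (a', b')" by (cases y)
      have h: "a \<in> \<Union>A" "b \<in> \<Union>B" "a' \<in> \<Union>A" "b' \<in> \<Union>B" "{a, b} = {a', b'}"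
        using hx x y by auto
      have "a \<noteq> b'" "b \<noteq> a'" using disjU[OF that] h(1-4) by blast+
      then have "a = a' \<and> b = b'" using h(5) by (metis doubleton_eq_iff)
      then show "x = y" using x y by simp
    qed
    then show ?thesis by (simp add: Ep_def card_image card_cartesian_product)
  qed
  have bad: "{f. \<not> Prop P (edges_of n f) s} \<subseteq> (\<Union>i\<in>I. Ev i)"
  proof
    fix f assume "f \<in> {f. \<not> Prop P (edges_of n f) s}"
    then obtain A B where AB: "A \<subseteq> P" "B \<subseteq> P" "A \<inter> B = {}" "s \<le> card (\<Union>A)" "s \<le> card (\<Union>B)"
      and no: "\<not> (\<exists>a\<in>\<Union>A. \<exists>b\<in>\<Union>B. {a, b} \<in> edges_of n f)"
      unfolding Prop_def by blast
    have ABI: "(A, B) \<in> I" using AB by (simp add: I_def)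
    have "f \<in> Ev (A, B)"
      unfolding Ev_def
    proof (safe)
      fix e assume e: "e \<in> Ep (A, B)" "f e"
      then have "e \<in> pairs_on {..<n}" using Ep_sub[OF ABI] by blast
      then have "e \<in> edges_of n f" using e(2) by (simp add: edges_of_def)
      moreover obtain a b where "a \<in> \<Union>A" "b \<in> \<Union>B" "e = {a, b}" using e(1) by (auto simp: Ep_def)
      ultimately show False using no by blast
    qed
    then show "f \<in> (\<Union>i\<in>I. Ev i)" using ABI by blast
  qed
  have "measure_pmf.prob (Gnp n p) {f. \<not> Prop P (edges_of n f) s} \<le> measure_pmf.prob (Gnp n p) (\<Union>i\<in>I. Ev i)"
    using bad by (intro measure_pmf.finite_measure_mono) auto
  also have "\<dots> \<le> (\<Sum>i\<in>I. measure_pmf.prob (Gnp n p) (Ev i))"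
    using finI by (intro measure_pmf.finite_measure_subadditive_finite) auto
  also have "\<dots> \<le> (\<Sum>i\<in>I. exp (- p * s\<^sup>2))"
  proof (rule sum_mono)
    fix i assume iI: "i \<in> I"
    obtain A B where i: "i = (A, B)" by (cases i)
    have ABI: "(A, B) \<in> I" using iI i by simp
    have "measure_pmf.prob (Gnp n p) (Ev i) = (1 - p) ^ card (Ep (A, B))"
      unfolding Ev_def i by (rule prob_no_edges[OF Ep_sub[OF ABI] p])
    also have "\<dots> \<le> exp (- p * card (Ep (A, B)))" by (rule one_minus_pow_le_exp[OF p])
    also have "\<dots> \<le> exp (- p * s\<^sup>2)"
    proof -
      have "s\<^sup>2 \<le> real (card (\<Union>A)) * real (card (\<Union>B))"
        using ABI s unfolding power2_eq_square I_def by (intro mult_mono) auto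
      then have "s\<^sup>2 \<le> real (card (Ep (A, B)))" using cardEp[OF ABI] by simp
      then show ?thesis using p by (simp add: mult_left_mono)
    qed
    finally show "measure_pmf.prob (Gnp n p) (Ev i) \<le> exp (- p * s\<^sup>2)" .
  qed
  also have "\<dots> = card I * exp (- p * s\<^sup>2)" by simp
  also have "\<dots> \<le> 4 ^ card P * exp (- p * s\<^sup>2)"
    using cardI by (intro mult_right_mono) (auto simp: of_nat_le_iff[symmetric])
  finally show ?thesis .
qed



lemma pairs_on_mem: "{x, y} \<in> pairs_on V \<Longrightarrow> x \<in> V \<and> y \<in> V"
  unfolding pairs_on_def by (auto simp: doubleton_eq_iff)

lemma det:
  fixes P :: "nat set set" and L s C p D :: real
  assumes finP: "finite P" and sub: "\<forall>X\<in>P. X \<subseteq> {..<n}"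
    and pc: "\<forall>X\<in>P. rconn (eadj H) X" and small: "\<forall>X\<in>P. finite X \<and> card X \<le> L"
    and dis: "\<forall>X\<in>P. \<forall>Y\<in>P. X \<noteq> Y \<longrightarrow> X \<inter> Y = {}"
    and L0: "0 < L" and Ls: "L \<le> s" and PP: "Prop P F s" and R: "H \<union> F \<subseteq> pairs_on {..<n}"
    and Ldef: "L = 96 * C * D / (real n * p)"
    and len: "(real n)^2 * p / (9600 * C * D) \<le> (card (\<Union>P) - 3 * s) / (2 * L)"
  shows "good_family n C p D (H \<union> F)"
proof -
  obtain Ts where Ts: "\<forall>i<length Ts. Ts!i \<subseteq> P \<and> Ts!i \<noteq> {} \<and> rconn (padj F) (Ts!i) \<and>
        L \<le> card (\<Union>(Ts!i)) \<and> card (\<Union>(Ts!i)) \<le> 2 * L"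
      "\<forall>i<length Ts. \<forall>j<length Ts. i \<noteq> j \<longrightarrow> Ts!i \<inter> Ts!j = {}"
      "(card (\<Union>P) - 3 * s) / (2 * L) \<le> length Ts"
    using clusters_exist[OF finP small L0 Ls PP, of P] by blast
  define RR where "RR = H \<union> F"
  define Rs where "Rs = map (\<lambda>T. (\<Union>T, {e \<in> RR. e \<subseteq> \<Union>T})) Ts"
  have L2: "192 * C * D / (real n * p) = 2 * L" using Ldef by simp
  show ?thesis
    unfolding good_family_def RR_def[symmetric]
  proof (intro exI[of _ Rs] conjI allI impI)
    show "(real n)\<^sup>2 * p / (9600 * C * D) \<le> real (length Rs)"
      using len Ts(3) by (simp add: Rs_def)
  next
    fix i assume "i < length Rs"
    then have i: "i < length Ts" by (simp add: Rs_def)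
    have fst: "fst (Rs ! i) = \<Union>(Ts!i)" and snd: "snd (Rs ! i) = {e \<in> RR. e \<subseteq> \<Union>(Ts!i)}"
      using i by (auto simp: Rs_def)
    have TP: "Ts!i \<subseteq> P" using Ts(1) i by blast
    show "fst (Rs ! i) \<subseteq> {..<n}" using TP sub fst by blast
    show "snd (Rs ! i) \<subseteq> RR" using snd by blast
    show "graph_on (fst (Rs ! i)) (snd (Rs ! i))"
      unfolding graph_on_def
    proof
      fix e assume "e \<in> snd (Rs ! i)"
      then have e: "e \<in> RR" "e \<subseteq> \<Union>(Ts!i)" using snd by auto
      then have "e \<in> pairs_on {..<n}" using R by (auto simp: RR_def)
      then obtain a b where "a \<noteq> b" "e = {a, b}" by (auto simp: pairs_on_def)
      then show "e \<in> pairs_on (fst (Rs ! i))" using e(2) fst by (auto simp: pairs_on_def)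
    qed
    show "96 * C * D / (real n * p) \<le> real (card (fst (Rs ! i)))" using Ts(1) i fst Ldef by simp
    show "real (card (fst (Rs ! i))) \<le> 192 * C * D / (real n * p)" using Ts(1) i fst L2 by simp
    have pcT: "\<forall>X\<in>Ts!i. rconn (eadj H) X" using pc TP by blast
    have cc: "rconn (eadj RR) (\<Union>(Ts!i))" unfolding RR_def using union_conn[OF pcT] Ts(1) i by blast
    show "connected_graph (fst (Rs ! i)) (snd (Rs ! i))"
      unfolding connected_graph_def
    proof (intro conjI ballI)
      show "fst (Rs ! i) \<noteq> {}"
      proof
        assume "fst (Rs ! i) = {}"
        then have "\<Union>(Ts!i) = {}" using fst by simp
        then have "card (\<Union>(Ts!i)) = 0" by (simp only: card.empty)
        then show False using Ts(1) i L0 by force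
      qed
      fix u v assume "u \<in> fst (Rs ! i)" "v \<in> fst (Rs ! i)"
      then have "u \<in> \<Union>(Ts!i)" "v \<in> \<Union>(Ts!i)" using fst by auto
      then have "rreach (eadj RR) (\<Union>(Ts!i)) u v" using cc unfolding rconn_def by blast
      then show "(\<lambda>x y. {x, y} \<in> snd (Rs ! i))\<^sup>*\<^sup>* u v"
        unfolding rreach_def snd by (rule rtranclp_mono[THEN predicate2D, rotated]) auto
    qed
  next
    fix i j assume "i < length Rs" "j < length Rs" "i \<noteq> j"
    then have ij: "i < length Ts" "j < length Ts" "i \<noteq> j" by (auto simp: Rs_def)
    have fi: "fst (Rs ! i) = \<Union>(Ts!i)" "fst (Rs ! j) = \<Union>(Ts!j)" using ij by (auto simp: Rs_def)
    have TP: "Ts!i \<subseteq> P" "Ts!j \<subseteq> P" using Ts(1) ij by auto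
    have TT: "Ts!i \<inter> Ts!j = {}" using Ts(2) ij by blast
    show "fst (Rs ! i) \<inter> fst (Rs ! j) = {}"
    proof (rule ccontr)
      assume "fst (Rs ! i) \<inter> fst (Rs ! j) \<noteq> {}"
      then obtain x X Y where "x \<in> X" "X \<in> Ts!i" "x \<in> Y" "Y \<in> Ts!j" using fi by blast
      moreover have "X \<noteq> Y" using TT calculation by blast
      ultimately show False using dis TP by blast
    qed
  qed
qed


lemma fixed_n:
  fixes C p \<epsilon> :: real and n :: nat and H :: "nat set set"
  assumes C8: "C \<ge> 8" and p0: "0 < p" and p2: "p \<le> 2 / real n" and n2: "2 \<le> n"
    and eps: "exp (- ((real n)^2 * p) / 250) \<le> \<epsilon>"
    and gH: "graph_on {..<n} H" and cH: "connected_graph {..<n} H"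
    and dH: "real (max_degree n H) \<le> (real n)^2 * p / (4800 * C)"
  shows "measure_pmf.prob (Gnp n p) {G. good_family n C p (real (max_degree n H)) (H \<union> edges_of n G)} \<ge> 1 - \<epsilon>"
proof -
  define \<Delta> where "\<Delta> = max_degree n H"
  have Hsub: "H \<subseteq> pairs_on {..<n}" using gH by (simp add: graph_on_def)
  have nbr_lt: "u < n \<and> v < n" if "{u, v} \<in> H" for u v using pairs_on_mem[of u v] that Hsub by blast
  have deg: "finite {u. {u, v} \<in> H} \<and> card {u. {u, v} \<in> H} \<le> \<Delta>" for v
  proof -
    have sub: "{u. {u, v} \<in> H} \<subseteq> {..<n}" using nbr_lt by auto
    then have fin: "finite {u. {u, v} \<in> H}" using finite_subset by blast
    show ?thesis
    proof (cases "v < n")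
      case True
      have "card {u. {u, v} \<in> H} = degree H v" by (simp add: degree_def)
      also have "\<dots> \<le> \<Delta>" unfolding \<Delta>_def max_degree_def using True by (intro Max_ge) auto
      finally show ?thesis using fin by simp
    next
      case False
      then have "{u. {u, v} \<in> H} = {}" using nbr_lt by auto
      then show ?thesis by simp
    qed
  qed
  have D1: "1 \<le> \<Delta>"
  proof -
    have "(0::nat) \<in> {..<n}" "(1::nat) \<in> {..<n}" using n2 by auto
    then have "(\<lambda>x y. {x, y} \<in> H)\<^sup>*\<^sup>* 0 1" using cH unfolding connected_graph_def by blast
    then have "\<exists>y. {0, y} \<in> H"
    proof (cases rule: converse_rtranclpE)
      case base then show ?thesis by simp
    next
      case (step y) then show ?thesis by blast
    qed
    then obtain y where "{0, y} \<in> H" by blast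
    then have "y \<in> {u. {u, 0} \<in> H}" by (simp add: insert_commute)
    then have "1 \<le> card {u. {u, 0::nat} \<in> H}" using deg[of 0] by (metis card_0_eq empty_iff less_one not_le)
    then show ?thesis using deg[of 0] by linarith
  qed
  have cV: "rconn (eadj H) {..<n}"
    unfolding rconn_def
  proof (intro ballI)
    fix u v assume "u \<in> {..<n}" "v \<in> {..<n}"
    then have "(\<lambda>x y. {x, y} \<in> H)\<^sup>*\<^sup>* u v" using cH unfolding connected_graph_def by blast
    then show "rreach (eadj H) {..<n} u v"
      unfolding rreach_def by (rule rtranclp_mono[THEN predicate2D, rotated]) (auto dest: nbr_lt)
  qed
  have npos: "0 < real n" using n2 by simp
  have np2: "real n * p \<le> 2" using p2 npos by (simp add: field_simps)
  have np0: "0 < real n * p" using npos p0 by simp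
  define x where "x = 96 * C / (real n * p)"
  have x384: "384 \<le> x"
  proof -
    have "96 * C \<ge> 384 * (real n * p)" using C8 np2 np0 by linarith
    then show ?thesis unfolding x_def using np0 by (simp add: field_simps)
  qed
  define k where "k = nat \<lfloor>x\<rfloor>"
  have kx: "real k \<le> x" "x - 1 \<le> real k" using x384 by (auto simp: k_def)
  have k1: "1 \<le> k" using kx x384 by linarith
  define L where "L = real \<Delta> * x"
  have Ldef: "L = 96 * C * real \<Delta> / (real n * p)" by (simp add: L_def x_def)
  have L0: "0 < L" using D1 x384 by (simp add: L_def)
  have Ln: "L \<le> real n / 50"
  proof -
    have "96 * C * real \<Delta> \<le> 96 * C * ((real n)^2 * p / (4800 * C))"
      using dH C8 by (intro mult_left_mono) (auto simp: \<Delta>_def)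
    also have "\<dots> = real n * (real n * p) / 50" using C8 by (simp add: field_simps power2_eq_square)
    finally show ?thesis unfolding Ldef using np0 by (simp add: field_simps)
  qed
  obtain P where P: "finite P" "\<forall>X\<in>P. X \<subseteq> {..<n} \<and> rconn (eadj H) X \<and> k \<le> card X \<and> card X \<le> 1 + \<Delta> * (k - 1)"
     "\<forall>X\<in>P. \<forall>Y\<in>P. X \<noteq> Y \<longrightarrow> X \<inter> Y = {}" "card {..<n} < card (\<Union>P) + k"
    using pieces_exist[OF _ cV k1 deg] by blast
  have sub: "\<forall>X\<in>P. X \<subseteq> {..<n}" and pc: "\<forall>X\<in>P. rconn (eadj H) X" using P(2) by auto
  have small: "\<forall>X\<in>P. finite X \<and> card X \<le> L"
  proof
    fix X assume X: "X \<in> P"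
    have "card X \<le> 1 + \<Delta> * (k - 1)" using P(2) X by blast
    also have "\<dots> \<le> \<Delta> * k" using D1 k1 by (cases k) auto
    finally have "real (card X) \<le> real \<Delta> * real k" by (metis of_nat_le_iff of_nat_mult)
    also have "\<dots> \<le> L" unfolding L_def using kx by (intro mult_left_mono) auto
    finally show "finite X \<and> card X \<le> L" using X sub finite_subset[of X "{..<n}"] by auto
  qed
  define s where "s = real n / 10"
  have Ls: "L \<le> s" using Ln npos by (simp add: s_def)
  define N where "N = card P"
  have Nk: "N * k \<le> n"
  proof -
    have "card (\<Union>P) = sum card P"
    proof (rule card_Union_disjoint)
      show "pairwise disjnt P" using P(3) by (auto simp: pairwise_def disjnt_def)
      show "finite A" if "A \<in> P" for A using small that by blast
    qed
    moreover have "sum card P \<ge> sum (\<lambda>_. k) P" using P(2) by (intro sum_mono) auto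
    moreover have "card (\<Union>P) \<le> n" using card_mono[of "{..<n}" "\<Union>P"] sub by auto
    ultimately show ?thesis by (simp add: N_def)
  qed
  have N_bound: "2 * real N \<le> (real n)^2 * p / 192"
  proof -
    have xk: "x / 2 \<le> real k" using kx x384 by linarith
    have "real N * (x / 2) \<le> real N * real k" using xk by (intro mult_left_mono) auto
    also have "\<dots> \<le> real n" using Nk by (metis of_nat_le_iff of_nat_mult)
    finally have "real N * x \<le> 2 * real n" by simp
    then have "real N * 96 * C \<le> 2 * real n * (real n * p)" unfolding x_def using np0
      by (simp add: field_simps)
    moreover have "real N * 96 * 8 \<le> real N * 96 * C"
      using C8 by (intro mult_left_mono) auto
    ultimately have "real N * 96 * 8 \<le> 2 * real n * (real n * p)" by linarith
    then show ?thesis by (simp add: power2_eq_square field_simps)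
  qed
  have probbad: "measure_pmf.prob (Gnp n p) {f. \<not> Prop P (edges_of n f) s} \<le> \<epsilon>"
  proof -
    have "2 * p \<le> real n * p" using n2 p0 by (intro mult_right_mono) auto
    then have p1: "p \<le> 1" using np2 by linarith
    have "measure_pmf.prob (Gnp n p) {f. \<not> Prop P (edges_of n f) s} \<le> 4 ^ N * exp (- p * s\<^sup>2)"
      unfolding N_def by (rule prob_not_Prop[OF P(1) sub P(3)]) (use p0 p1 npos in \<open>auto simp: s_def\<close>)
    also have "(4::real) ^ N \<le> exp (2 * real N)"
    proof -
      have e1: "2 \<le> exp (1::real)" using exp_ge_add_one_self[of 1] by simp
      have "(2::real) * 2 \<le> exp 1 * exp 1" using mult_mono[OF e1 e1] by simp
      moreover have "exp (2::real) = exp 1 * exp 1" using exp_add[of 1 1] by simp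
      ultimately have "(4::real) \<le> exp 2" by simp
      then have "(4::real) ^ N \<le> exp 2 ^ N" by (intro power_mono) auto
      also have "\<dots> = exp (2 * real N)" by (simp add: exp_of_nat_mult[symmetric] mult.commute)
      finally show ?thesis .
    qed
    then have "4 ^ N * exp (- p * s\<^sup>2) \<le> exp (2 * real N) * exp (- p * s\<^sup>2)" by simp
    also have "\<dots> = exp (2 * real N - p * s\<^sup>2)" by (simp add: exp_add[symmetric])
    also have "\<dots> \<le> exp (- ((real n)^2 * p) / 250)"
    proof -
      have "p * s\<^sup>2 = (real n)^2 * p / 100" by (simp add: s_def power2_eq_square field_simps)
      moreover have "0 \<le> (real n)^2 * p" using p0 by simp
      ultimately have "2 * real N - p * s\<^sup>2 \<le> - ((real n)^2 * p) / 250" using N_bound by linarith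
      then show ?thesis by simp
    qed
    also have "\<dots> \<le> \<epsilon>" by (rule eps)
    finally show ?thesis .
  qed
  have len: "(real n)^2 * p / (9600 * C * real \<Delta>) \<le> (card (\<Union>P) - 3 * s) / (2 * L)"
  proof -
    have e1: "(real n)^2 * p / (9600 * C * real \<Delta>) = real n / (100 * L)"
      unfolding Ldef using np0 C8 D1 by (simp add: field_simps power2_eq_square)
    have "real k \<le> L" using kx D1 L_def by (smt (verit) mult_le_cancel_right1 of_nat_1 of_nat_le_iff x384)
    then have "real n - L \<le> real (card (\<Union>P))" using P(4) by simp
    then have "real n * 34 / 50 \<le> real (card (\<Union>P)) - 3 * s" using Ln by (simp add: s_def)
    then have "real n * 34 / 50 / (2 * L) \<le> (real (card (\<Union>P)) - 3 * s) / (2 * L)"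
      using L0 by (intro divide_right_mono) auto
    moreover have "real n / (100 * L) \<le> real n * 34 / 50 / (2 * L)"
      using L0 npos by (simp add: field_simps)
    ultimately show ?thesis using e1 by linarith
  qed
  have R: "\<forall>f. H \<union> edges_of n f \<subseteq> pairs_on {..<n}" using Hsub by (auto simp: edges_of_def)
  have good: "{f. Prop P (edges_of n f) s} \<subseteq> {G. good_family n C p (real (max_degree n H)) (H \<union> edges_of n G)}"
  proof
    fix f assume "f \<in> {f. Prop P (edges_of n f) s}"
    then have "Prop P (edges_of n f) s" by simp
    from det[OF P(1) sub pc small P(3) L0 Ls this R[rule_format] Ldef len]
    show "f \<in> {G. good_family n C p (real (max_degree n H)) (H \<union> edges_of n G)}" by (simp add: \<Delta>_def)
  qed
  have "measure_pmf.prob (Gnp n p) {f. Prop P (edges_of n f) s} = 1 - measure_pmf.prob (Gnp n p) {f. \<not> Prop P (edges_of n f) s}"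
    using measure_pmf.prob_compl[of "{f. \<not> Prop P (edges_of n f) s}" "Gnp n p"]
    by (simp add: Compl_eq_Diff_UNIV[symmetric] Collect_neg_eq[symmetric])
  then have "1 - \<epsilon> \<le> measure_pmf.prob (Gnp n p) {f. Prop P (edges_of n f) s}" using probbad by simp
  also have "\<dots> \<le> measure_pmf.prob (Gnp n p) {G. good_family n C p (real (max_degree n H)) (H \<union> edges_of n G)}"
    using good by (intro measure_pmf.finite_measure_mono) auto
  finally show ?thesis .
qed



theorem mainTheorem4:
  fixes C :: real and p :: "nat \<Rightarrow> real"
  assumes "C \<ge> 8"
    and "\<forall>\<^sub>F n in sequentially. 0 < p n \<and> p n \<le> 2 / real n"
    and "filterlim (\<lambda>n. (real n)^2 * p n) at_top sequentially"
  shows "\<forall>\<epsilon>>0. \<forall>\<^sub>F n in sequentially. \<forall>H.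
           graph_on {..<n} H \<and> connected_graph {..<n} H \<and>
           real (max_degree n H) \<le> (real n)^2 * p n / (4800 * C) \<longrightarrow>
           measure_pmf.prob (Gnp n (p n))
             {G. good_family n C (p n) (real (max_degree n H)) (H \<union> edges_of n G)} \<ge> 1 - \<epsilon>"
proof (intro allI impI)
  fix \<epsilon> :: real assume e0: "\<epsilon> > 0"
  define M where "M = max 4 (- 250 * ln \<epsilon>)"
  have ev: "\<forall>\<^sub>F n in sequentially. M \<le> (real n)^2 * p n"
    using assms(3) unfolding filterlim_at_top by blast
  show "\<forall>\<^sub>F n in sequentially. \<forall>H.
           graph_on {..<n} H \<and> connected_graph {..<n} H \<and>
           real (max_degree n H) \<le> (real n)^2 * p n / (4800 * C) \<longrightarrow>
           measure_pmf.prob (Gnp n (p n))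
             {G. good_family n C (p n) (real (max_degree n H)) (H \<union> edges_of n G)} \<ge> 1 - \<epsilon>"
    using eventually_conj[OF assms(2) ev]
  proof (rule eventually_mono)
    fix n assume h: "(0 < p n \<and> p n \<le> 2 / real n) \<and> M \<le> (real n)^2 * p n"
    have p0: "0 < p n" and p2: "p n \<le> 2 / real n" and hM: "M \<le> (real n)^2 * p n" using h by auto
    have npos: "0 < n"
    proof (rule ccontr)
      assume "\<not> 0 < n" then have "n = 0" by simp
      then show False using p0 p2 by simp
    qed
    have "(real n)^2 * p n \<le> (real n)^2 * (2 / real n)" using p2 by (intro mult_left_mono) auto
    also have "\<dots> = 2 * real n" using npos by (simp add: power2_eq_square field_simps)
    finally have "4 \<le> 2 * real n" using hM unfolding M_def by linarith
    then have n2: "2 \<le> n" by simp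
    have "- ((real n)^2 * p n) / 250 \<le> ln \<epsilon>" using hM unfolding M_def by linarith
    then have eps: "exp (- ((real n)^2 * p n) / 250) \<le> \<epsilon>" using e0
      by (metis exp_le_cancel_iff exp_ln)
    show "\<forall>H. graph_on {..<n} H \<and> connected_graph {..<n} H \<and>
           real (max_degree n H) \<le> (real n)^2 * p n / (4800 * C) \<longrightarrow>
           measure_pmf.prob (Gnp n (p n))
             {G. good_family n C (p n) (real (max_degree n H)) (H \<union> edges_of n G)} \<ge> 1 - \<epsilon>"
      using fixed_n[OF assms(1) p0 p2 n2 eps] by blast
  qed
qed


end
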